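(* For $u=(u_1,\dots,u_n)$ and $v=(v_1,\dots,v_n)$, \begin{multline*} \sum_{w\in\mathfrak S_u\times\mathfrak S_v}w\biggl(\prod_{i=1}^n\frac{1}{u_i-tv_i}\prod_{1\le i<j\le n}\frac{u_i-tu_j}{u_i-u_j}\cdot\frac{u_i-v_j}{u_i-tv_j}\cdot\frac{v_i-tv_j}{v_i-v_j}\biggr)\\ =\frac{(t;t)_n}{(1-t)^n}\sum_{w\in\mathfrak S_v}w\biggl(\prod_{i=1}^n\frac{1}{u_i-tv_i}\prod_{1\le i<j\le n}\frac{u_i-v_j}{u_i-tv_j}\cdot\frac{v_i-tv_j}{v_i-v_j}\biggr). \end{multline*}
   Context: $\mathfrak S_u$ (resp. $\mathfrak S_v$) is the symmetric group acting by permuting the variables $u_1,\dots,u_n$ (resp. $v_1,\dots,v_n$), and $\mathfrak S_u\times\mathfrak S_v$ permutes both sets independently; $w(f)$ denotes the function obtained by permuting variables. $(t;t)_n=(1-t)(1-t^2)\cdots(1-t^n)$. *)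

theory Defs
  imports "HOL-Combinatorics.Permutations" Complex_Main
begin

definition qpoch :: "complex \<Rightarrow> nat \<Rightarrow> complex" where
  "qpoch t n = (\<Prod>k=1..n. 1 - t ^ k)"

definition lhs_summand :: "nat \<Rightarrow> complex \<Rightarrow> (nat \<Rightarrow> complex) \<Rightarrow> (nat \<Rightarrow> complex) \<Rightarrow> complex" where
  "lhs_summand n t u v =
     (\<Prod>i<n. 1 / (u i - t * v i)) *
     (\<Prod>i<n. \<Prod>j\<in>{i<..<n}.
        (u i - t * u j) / (u i - u j) * ((u i - v j) / (u i - t * v j)) * ((v i - t * v j) / (v i - v j)))"

definition rhs_summand :: "nat \<Rightarrow> complex \<Rightarrow> (nat \<Rightarrow> complex) \<Rightarrow> (nat \<Rightarrow> complex) \<Rightarrow> complex" where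
  "rhs_summand n t u v =
     (\<Prod>i<n. 1 / (u i - t * v i)) *
     (\<Prod>i<n. \<Prod>j\<in>{i<..<n}.
        (u i - v j) / (u i - t * v j) * ((v i - t * v j) / (v i - v j)))"

end

theory Submission
  imports Defs
begin


definition Tk :: "complex \<Rightarrow> (nat \<Rightarrow> complex) \<Rightarrow> nat set \<Rightarrow> nat \<Rightarrow> complex" where
  "Tk t x S k = (\<Prod>i\<in>S-{k}. (x i - t * x k) / (x i - x k))"

lemma Tk_insert:
  assumes "finite S" "a \<notin> S" "k \<in> S"
  shows "Tk t x (insert a S) k = (x a - t * x k) / (x a - x k) * Tk t x S k"
proof -
  have "insert a S - {k} = insert a (S - {k})" using assms by auto
  then show ?thesis unfolding Tk_def using assms by simp
qed

lemma Tk_insert_self: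
  assumes "a \<notin> S"
  shows "Tk t x (insert a S) a = (\<Prod>i\<in>S. (x i - t * x a) / (x i - x a))"
proof -
  have "insert a S - {a} = S" using assms by auto
  then show ?thesis unfolding Tk_def by simp
qed

lemma perk_identity:
  fixes a b z t T :: complex
  assumes "b \<noteq> z" "b \<noteq> a" "a \<noteq> z"
  shows "(a - t * b) / (a - b) * T * b / (b - z) =
     (a - t * z) / (a - z) * (T * b / (b - z)) - (1 - t) * (T * b / (b - a)) * (a / (a - z))"
proof -
  have 1: "b - z \<noteq> 0" "a - b \<noteq> 0" "a - z \<noteq> 0" "b - a \<noteq> 0" using assms by auto
  show ?thesis using 1 by (simp add: divide_simps) (simp add: algebra_simps)
qed

lemma star_lemma:
  assumes "finite S" "inj_on x S" "z \<notin> x ` S"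
  shows "(\<Prod>i\<in>S. (x i - t * z) / (x i - z)) =
         t ^ card S + (1 - t) * (\<Sum>k\<in>S. Tk t x S k * x k / (x k - z))"
  using assms
proof (induction S arbitrary: z rule: finite_induct)
  case empty
  then show ?case by simp
next
  case (insert a S)
  have inj: "inj_on x S" and xa: "x a \<notin> x ` S" using insert by auto
  have zS: "z \<notin> x ` S" and za: "x a \<noteq> z" using insert by auto
  note IHz = insert.IH[OF inj zS]
  note IHa = insert.IH[OF inj xa]
  define c where "c = card S"
  define \<alpha> where "\<alpha> = (x a - t * z) / (x a - z)"
  define \<beta> where "\<beta> = x a / (x a - z)"
  have ab: "\<alpha> = t + (1 - t) * \<beta>" unfolding \<alpha>_def \<beta>_def using za
    by (simp add: field_simps; simp add: algebra_simps)
  define G where "G = (\<Sum>k\<in>S. Tk t x S k * x k / (x k - z))"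
  define H where "H = (\<Sum>k\<in>S. Tk t x S k * x k / (x k - x a))"
  define Q where "Q = (\<Sum>k\<in>S. Tk t x (insert a S) k * x k / (x k - z))"
  have Qeq: "Q = \<alpha> * G - (1 - t) * H * \<beta>"
  proof -
    have "Q = (\<Sum>k\<in>S. \<alpha> * (Tk t x S k * x k / (x k - z)) - (1 - t) * (Tk t x S k * x k / (x k - x a)) * \<beta>)"
      unfolding Q_def
    proof (rule sum.cong)
      fix k assume k: "k \<in> S"
      have kz: "x k \<noteq> z" using k zS by auto
      have ka: "x k \<noteq> x a" using k xa by (metis image_eqI)
      show "Tk t x (insert a S) k * x k / (x k - z) =
        \<alpha> * (Tk t x S k * x k / (x k - z)) - (1 - t) * (Tk t x S k * x k / (x k - x a)) * \<beta>"
        unfolding Tk_insert[OF insert(1,2) k] \<alpha>_def \<beta>_def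
        using perk_identity[OF kz ka za] by simp
    qed simp
    also have "\<dots> = \<alpha> * G - (1 - t) * H * \<beta>"
      unfolding G_def H_def by (simp add: sum_subtractf sum_distrib_left sum_distrib_right)
    finally show ?thesis .
  qed
  have "(\<Prod>i\<in>insert a S. (x i - t * z) / (x i - z)) = \<alpha> * (t ^ c + (1 - t) * G)"
    using insert IHz unfolding \<alpha>_def c_def G_def by simp
  also have "\<dots> = t ^ Suc c + (1 - t) * ((t ^ c + (1 - t) * H) * \<beta> + Q)"
    unfolding Qeq ab by (simp add: algebra_simps)
  also have "\<dots> = t ^ card (insert a S) + (1 - t) * (\<Sum>k\<in>insert a S. Tk t x (insert a S) k * x k / (x k - z))"
    using insert(1,2) IHa unfolding c_def H_def Q_def \<beta>_def
    by (simp add: Tk_insert_self)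
  finally show ?case .
qed

lemma C_lemma:
  assumes "finite S" "inj_on x S"
  shows "(\<Sum>k\<in>S. Tk t x S k) = (\<Sum>m<card S. t ^ m)"
  using assms
proof (induction S rule: finite_induct)
  case empty
  then show ?case by simp
next
  case (insert a S)
  have inj: "inj_on x S" and xa: "x a \<notin> x ` S" using insert by auto
  note IHa = star_lemma[OF insert(1) inj xa, of t]
  have "(\<Sum>k\<in>insert a S. Tk t x (insert a S) k) =
      (\<Sum>k\<in>S. Tk t x (insert a S) k) + Tk t x (insert a S) a"
    using insert(1,2) by simp
  also have "(\<Sum>k\<in>S. Tk t x (insert a S) k) =
      (\<Sum>k\<in>S. Tk t x S k - (1 - t) * (Tk t x S k * x k / (x k - x a)))"
  proof (rule sum.cong)
    fix k assume k: "k \<in> S"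
    have ka: "x k \<noteq> x a" using k xa by (metis image_eqI)
    show "Tk t x (insert a S) k = Tk t x S k - (1 - t) * (Tk t x S k * x k / (x k - x a))"
      unfolding Tk_insert[OF insert(1,2) k] using ka
      by (simp add: field_simps; simp add: algebra_simps)
  qed simp
  also have "\<dots> = (\<Sum>k\<in>S. Tk t x S k) - (1 - t) * (\<Sum>k\<in>S. Tk t x S k * x k / (x k - x a))"
    by (simp add: sum_subtractf sum_distrib_left)
  finally show ?case
    using insert IHa by (simp add: Tk_insert_self)
qed

definition Af :: "nat \<Rightarrow> complex \<Rightarrow> (nat \<Rightarrow> complex) \<Rightarrow> complex" where
  "Af n t x = (\<Prod>i<n. \<Prod>j\<in>{i<..<n}. (x i - t * x j) / (x i - x j))"

lemma Af_Suc: "Af (Suc n) t x = (\<Prod>i<n. (x i - t * x n) / (x i - x n)) * Af n t x"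
proof -
  have "Af (Suc n) t x = (\<Prod>i<n. \<Prod>j\<in>{i<..<Suc n}. (x i - t * x j) / (x i - x j))"
  proof -
    have e: "{n<..<Suc n} = {}" by auto
    show ?thesis unfolding Af_def by (simp add: e)
  qed
  also have "\<dots> = (\<Prod>i<n. (x i - t * x n) / (x i - x n) * (\<Prod>j\<in>{i<..<n}. (x i - t * x j) / (x i - x j)))"
  proof (rule prod.cong)
    fix i assume "i \<in> {..<n}"
    then have "{i<..<Suc n} = insert n {i<..<n}" by auto
    then show "(\<Prod>j\<in>{i<..<Suc n}. (x i - t * x j) / (x i - x j)) =
      (x i - t * x n) / (x i - x n) * (\<Prod>j\<in>{i<..<n}. (x i - t * x j) / (x i - x j))"
      by simp
  qed simp
  also have "\<dots> = (\<Prod>i<n. (x i - t * x n) / (x i - x n)) * Af n t x"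
    unfolding Af_def by (rule prod.distrib)
  finally show ?thesis .
qed

lemma bij_transpose_seg:
  assumes "b < Suc n"
  shows "bij_betw (transpose n b) {..<n} ({..<Suc n} - {b})"
proof (cases "b = n")
  case True
  then show ?thesis by (auto simp: bij_betw_def)
next
  case False
  show ?thesis unfolding bij_betw_def
  proof
    show "inj_on (transpose n b) {..<n}" by (rule inj_on_transpose)
    show "transpose n b ` {..<n} = {..<Suc n} - {b}"
    proof
      show "transpose n b ` {..<n} \<subseteq> {..<Suc n} - {b}"
        using assms False by (auto simp: transpose_def)
      show "{..<Suc n} - {b} \<subseteq> transpose n b ` {..<n}"
      proof
        fix i assume i: "i \<in> {..<Suc n} - {b}"
        have "transpose n b (transpose n b i) = i" by simp
        moreover have "transpose n b i \<in> {..<n}" using i assms False by (auto simp: transpose_def)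
        ultimately show "i \<in> transpose n b ` {..<n}" by (metis image_eqI)
      qed
    qed
  qed
qed

lemma HL_lemma:
  assumes "inj_on x {..<n}"
  shows "(\<Sum>\<sigma>\<in>{\<sigma>. \<sigma> permutes {..<n}}. Af n t (x \<circ> \<sigma>)) = (\<Prod>k<n. \<Sum>m<Suc k. t ^ m)"
  using assms
proof (induction n arbitrary: x)
  case 0
  then show ?case by (simp add: Af_def permutes_empty)
next
  case (Suc n)
  have seg: "{..<Suc n} = insert n {..<n}" by auto
  define F where "F = (\<Prod>k<n. \<Sum>m<Suc k. t ^ m)"
  have inner: "(\<Sum>q\<in>{p. p permutes {..<n}}. Af (Suc n) t (x \<circ> (transpose n b \<circ> q)))
      = F * Tk t x {..<Suc n} b" if b: "b \<in> {..<Suc n}" for b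
  proof -
    define y where "y = x \<circ> transpose n b"
    have bij: "bij_betw (transpose n b) {..<n} ({..<Suc n} - {b})"
      using bij_transpose_seg b by auto
    have injy: "inj_on y {..<n}"
    proof -
      have "inj_on x ({..<Suc n} - {b})" using Suc.prems by (rule inj_on_subset) auto
      then show ?thesis unfolding y_def using bij
        by (metis bij_betw_def comp_inj_on)
    qed
    have T: "(\<Prod>i<n. (y i - t * y n) / (y i - y n)) = Tk t x {..<Suc n} b"
    proof -
      have yn: "y n = x b" unfolding y_def by simp
      have "(\<Prod>i<n. (y i - t * y n) / (y i - y n)) = (\<Prod>i<n. ((\<lambda>j. (x j - t * x b) / (x j - x b)) \<circ> transpose n b) i)"
        unfolding yn by (simp add: y_def)
      also have "\<dots> = (\<Prod>i\<in>{..<Suc n} - {b}. (x i - t * x b) / (x i - x b))"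
        using prod.reindex_bij_betw[OF bij, of "\<lambda>j. (x j - t * x b) / (x j - x b)"] by simp
      finally show ?thesis unfolding Tk_def .
    qed
    have "(\<Sum>q\<in>{p. p permutes {..<n}}. Af (Suc n) t (x \<circ> (transpose n b \<circ> q)))
       = (\<Sum>q\<in>{p. p permutes {..<n}}. Af n t (y \<circ> q) * Tk t x {..<Suc n} b)"
    proof (rule sum.cong)
      fix q assume "q \<in> {p. p permutes {..<n}}"
      then have q: "q permutes {..<n}" by simp
      have qn: "q n = n" using q by (simp add: permutes_def)
      have "(\<Prod>i<n. ((y \<circ> q) i - t * (y \<circ> q) n) / ((y \<circ> q) i - (y \<circ> q) n))
         = (\<Prod>i<n. ((\<lambda>i. (y i - t * y n) / (y i - y n)) \<circ> q) i)"
        using qn by simp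
      also have "\<dots> = (\<Prod>i<n. (y i - t * y n) / (y i - y n))"
        using prod.permute[OF q, of "\<lambda>i. (y i - t * y n) / (y i - y n)"] by simp
      finally have "(\<Prod>i<n. ((y \<circ> q) i - t * (y \<circ> q) n) / ((y \<circ> q) i - (y \<circ> q) n)) = Tk t x {..<Suc n} b"
        using T by simp
      moreover have "x \<circ> (transpose n b \<circ> q) = y \<circ> q" unfolding y_def by (simp add: comp_assoc)
      ultimately show "Af (Suc n) t (x \<circ> (transpose n b \<circ> q)) = Af n t (y \<circ> q) * Tk t x {..<Suc n} b"
        by (simp add: Af_Suc mult.commute)
    qed simp
    also have "\<dots> = F * Tk t x {..<Suc n} b"
      using Suc.IH[OF injy] unfolding F_def by (simp add: sum_distrib_right[symmetric] comp_def)
    finally show ?thesis .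
  qed
  have "(\<Sum>\<sigma>\<in>{\<sigma>. \<sigma> permutes {..<Suc n}}. Af (Suc n) t (x \<circ> \<sigma>))
      = (\<Sum>b\<in>{..<Suc n}. \<Sum>q\<in>{p. p permutes {..<n}}. Af (Suc n) t (x \<circ> (transpose n b \<circ> q)))"
    unfolding seg by (rule sum_over_permutations_insert) auto
  also have "\<dots> = (\<Sum>b\<in>{..<Suc n}. F * Tk t x {..<Suc n} b)"
    using inner by (rule sum.cong[OF refl])
  also have "\<dots> = F * (\<Sum>m<Suc n. t ^ m)"
    using C_lemma[OF _ Suc.prems, of t] by (simp add: sum_distrib_left[symmetric])
  finally show ?case unfolding F_def by (simp only: prod.lessThan_Suc)
qed



definition Pset :: "nat \<Rightarrow> nat \<Rightarrow> (nat \<times> nat) set" where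
  "Pset n k = (SIGMA i:{..<n}. {i<..<n}) - {(k, Suc k)}"

lemma finite_Pset: "finite (Pset n k)"
  unfolding Pset_def by (rule finite_Diff) (auto intro!: finite_SigmaI)

lemma bij_invol: "(\<And>p. p \<in> A \<Longrightarrow> h p \<in> A \<and> h (h p) = p) \<Longrightarrow> bij_betw h A A"
  by (rule bij_betw_byWitness[of A h h A]) auto

lemma Pset_map1: "Suc k < n \<Longrightarrow> p \<in> Pset n k \<Longrightarrow> (transpose k (Suc k) (fst p), snd p) \<in> Pset n k"
  unfolding Pset_def by (cases p) (auto simp: transpose_def)

lemma Pset_map2: "Suc k < n \<Longrightarrow> p \<in> Pset n k \<Longrightarrow> (fst p, transpose k (Suc k) (snd p)) \<in> Pset n k"
  unfolding Pset_def by (cases p) (auto simp: transpose_def)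

lemma Pset_map3: "Suc k < n \<Longrightarrow> p \<in> Pset n k \<Longrightarrow> (transpose k (Suc k) (fst p), transpose k (Suc k) (snd p)) \<in> Pset n k"
  unfolding Pset_def by (cases p) (auto simp: transpose_def)

lemma prod_Pset_1: "(\<Prod>p\<in>Pset n k. g (transpose k (Suc k) (fst p)) (snd p)) = (\<Prod>p\<in>Pset n k. g (fst p) (snd p))" if "Suc k < n"
proof -
  let ?h = "\<lambda>p. (transpose k (Suc k) (fst p), snd p)"
  have "bij_betw ?h (Pset n k) (Pset n k)"
    by (rule bij_invol) (auto simp: Pset_map1 that)
  from prod.reindex_bij_betw[OF this, of "\<lambda>p. g (fst p) (snd p)"] show ?thesis by simp
qed

lemma prod_Pset_2: "(\<Prod>p\<in>Pset n k. g (fst p) (transpose k (Suc k) (snd p))) = (\<Prod>p\<in>Pset n k. g (fst p) (snd p))" if "Suc k < n"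
proof -
  let ?h = "\<lambda>p. (fst p, transpose k (Suc k) (snd p))"
  have "bij_betw ?h (Pset n k) (Pset n k)"
    by (rule bij_invol) (auto simp: Pset_map2 that)
  from prod.reindex_bij_betw[OF this, of "\<lambda>p. g (fst p) (snd p)"] show ?thesis by simp
qed

lemma prod_Pset_3: "(\<Prod>p\<in>Pset n k. g (transpose k (Suc k) (fst p)) (transpose k (Suc k) (snd p))) = (\<Prod>p\<in>Pset n k. g (fst p) (snd p))" if "Suc k < n"
proof -
  let ?h = "\<lambda>p. (transpose k (Suc k) (fst p), transpose k (Suc k) (snd p))"
  have "bij_betw ?h (Pset n k) (Pset n k)"
    by (rule bij_invol) (auto simp: Pset_map3 that)
  from prod.reindex_bij_betw[OF this, of "\<lambda>p. g (fst p) (snd p)"] show ?thesis by simp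
qed

definition Ee :: "nat \<Rightarrow> complex \<Rightarrow> nat \<Rightarrow> (nat \<Rightarrow> complex) \<Rightarrow> (nat \<Rightarrow> complex) \<Rightarrow> complex" where
  "Ee n t k u w = (\<Prod>i\<in>{..<n}-{k, Suc k}. 1 / (u i - t * w i)) *
     ((\<Prod>p\<in>Pset n k. (u (fst p) - w (snd p)) / (u (fst p) - t * w (snd p))) *
      (\<Prod>p\<in>Pset n k. (w (fst p) - t * w (snd p)) / (w (fst p) - w (snd p))))"

definition core :: "complex \<Rightarrow> complex \<Rightarrow> complex \<Rightarrow> complex \<Rightarrow> complex \<Rightarrow> complex" where
  "core t a b x y = 1 / (a - t * x) * (1 / (b - t * y)) * ((a - y) / (a - t * y)) * ((x - t * y) / (x - y))"

lemma Ee_u: "Ee n t k (u \<circ> transpose k (Suc k)) w = Ee n t k u w" if "Suc k < n"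
proof -
  have "(\<Prod>i\<in>{..<n}-{k, Suc k}. 1 / ((u \<circ> transpose k (Suc k)) i - t * w i)) = (\<Prod>i\<in>{..<n}-{k, Suc k}. 1 / (u i - t * w i))"
    by (rule prod.cong) auto
  moreover have "(\<Prod>p\<in>Pset n k. ((u \<circ> transpose k (Suc k)) (fst p) - w (snd p)) / ((u \<circ> transpose k (Suc k)) (fst p) - t * w (snd p)))
     = (\<Prod>p\<in>Pset n k. (u (fst p) - w (snd p)) / (u (fst p) - t * w (snd p)))"
    using prod_Pset_1[OF that, where g="\<lambda>i j. (u i - w j) / (u i - t * w j)"] by simp
  ultimately show ?thesis unfolding Ee_def by simp
qed

lemma Ee_w: "Ee n t k u (w \<circ> transpose k (Suc k)) = Ee n t k u w" if "Suc k < n"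
proof -
  have "(\<Prod>i\<in>{..<n}-{k, Suc k}. 1 / (u i - t * (w \<circ> transpose k (Suc k)) i)) = (\<Prod>i\<in>{..<n}-{k, Suc k}. 1 / (u i - t * w i))"
    by (rule prod.cong) auto
  moreover have "(\<Prod>p\<in>Pset n k. (u (fst p) - (w \<circ> transpose k (Suc k)) (snd p)) / (u (fst p) - t * (w \<circ> transpose k (Suc k)) (snd p)))
     = (\<Prod>p\<in>Pset n k. (u (fst p) - w (snd p)) / (u (fst p) - t * w (snd p)))"
    using prod_Pset_2[OF that, where g="\<lambda>i j. (u i - w j) / (u i - t * w j)"] by simp
  moreover have "(\<Prod>p\<in>Pset n k. ((w \<circ> transpose k (Suc k)) (fst p) - t * (w \<circ> transpose k (Suc k)) (snd p)) / ((w \<circ> transpose k (Suc k)) (fst p) - (w \<circ> transpose k (Suc k)) (snd p)))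
     = (\<Prod>p\<in>Pset n k. (w (fst p) - t * w (snd p)) / (w (fst p) - w (snd p)))"
    using prod_Pset_3[OF that, where g="\<lambda>i j. (w i - t * w j) / (w i - w j)"] by simp
  ultimately show ?thesis unfolding Ee_def by simp
qed

lemma decomp:
  assumes "Suc k < n"
  shows "rhs_summand n t u w = core t (u k) (u (Suc k)) (w k) (w (Suc k)) * Ee n t k u w"
proof -
  have fin: "finite (SIGMA i:{..<n}. {i<..<n})" by (auto intro!: finite_SigmaI)
  have kin: "(k, Suc k) \<in> (SIGMA i:{..<n}. {i<..<n})" using assms by auto
  have D: "(\<Prod>i<n. 1 / (u i - t * w i)) = 1 / (u k - t * w k) * (1 / (u (Suc k) - t * w (Suc k))) *
      (\<Prod>i\<in>{..<n}-{k, Suc k}. 1 / (u i - t * w i))"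
  proof -
    have "{..<n} = insert k (insert (Suc k) ({..<n}-{k, Suc k}))" using assms by auto
    then have "(\<Prod>i<n. 1 / (u i - t * w i)) = (\<Prod>i\<in>insert k (insert (Suc k) ({..<n}-{k, Suc k})). 1 / (u i - t * w i))"
      by simp
    also have "\<dots> = 1 / (u k - t * w k) * (1 / (u (Suc k) - t * w (Suc k))) *
      (\<Prod>i\<in>{..<n}-{k, Suc k}. 1 / (u i - t * w i))" by (simp add: mult.assoc)
    finally show ?thesis .
  qed
  have M: "(\<Prod>i<n. \<Prod>j\<in>{i<..<n}. (u i - w j) / (u i - t * w j) * ((w i - t * w j) / (w i - w j))) =
     ((u k - w (Suc k)) / (u k - t * w (Suc k)) * ((w k - t * w (Suc k)) / (w k - w (Suc k)))) *
     ((\<Prod>p\<in>Pset n k. (u (fst p) - w (snd p)) / (u (fst p) - t * w (snd p))) *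
      (\<Prod>p\<in>Pset n k. (w (fst p) - t * w (snd p)) / (w (fst p) - w (snd p))))"
  proof -
    let ?g = "\<lambda>p. (u (fst p) - w (snd p)) / (u (fst p) - t * w (snd p)) * ((w (fst p) - t * w (snd p)) / (w (fst p) - w (snd p)))"
    have "(\<Prod>i<n. \<Prod>j\<in>{i<..<n}. (u i - w j) / (u i - t * w j) * ((w i - t * w j) / (w i - w j))) =
        (\<Prod>p\<in>(SIGMA i:{..<n}. {i<..<n}). ?g p)"
      by (subst prod.Sigma) (auto simp: case_prod_beta)
    also have "\<dots> = ?g (k, Suc k) * (\<Prod>p\<in>Pset n k. ?g p)"
      unfolding Pset_def by (rule prod.remove[OF fin kin])
    also have "(\<Prod>p\<in>Pset n k. ?g p) = (\<Prod>p\<in>Pset n k. (u (fst p) - w (snd p)) / (u (fst p) - t * w (snd p))) *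
      (\<Prod>p\<in>Pset n k. (w (fst p) - t * w (snd p)) / (w (fst p) - w (snd p)))"
      by (rule prod.distrib)
    finally show ?thesis by simp
  qed
  show ?thesis unfolding rhs_summand_def D M Ee_def core_def by (simp only: ac_simps)
qed

lemma core_sym:
  fixes a b x y t :: complex
  assumes "x \<noteq> y" "a \<noteq> t * x" "a \<noteq> t * y" "b \<noteq> t * x" "b \<noteq> t * y"
  shows "core t b a x y + core t b a y x = core t a b x y + core t a b y x"
proof -
  have 1: "a - t * x \<noteq> 0" "a - t * y \<noteq> 0" "b - t * x \<noteq> 0" "b - t * y \<noteq> 0" "x - y \<noteq> 0" "y - x \<noteq> 0"
    using assms by auto
  show ?thesis using 1 unfolding core_def by (simp add: divide_simps) (simp add: algebra_simps)
qed



definition Fs :: "nat \<Rightarrow> complex \<Rightarrow> (nat \<Rightarrow> complex) \<Rightarrow> (nat \<Rightarrow> complex) \<Rightarrow> complex" where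
  "Fs n t u v = (\<Sum>\<tau>\<in>{\<tau>. \<tau> permutes {..<n}}. rhs_summand n t u (v \<circ> \<tau>))"

definition hypU :: "nat \<Rightarrow> complex \<Rightarrow> (nat \<Rightarrow> complex) \<Rightarrow> (nat \<Rightarrow> complex) \<Rightarrow> bool" where
  "hypU n t u v = (\<forall>i<n. \<forall>j<n. u i \<noteq> t * v j)"

lemma hypU_perm:
  assumes "\<sigma> permutes {..<n}" "hypU n t u v"
  shows "hypU n t (u \<circ> \<sigma>) v" "hypU n t u (v \<circ> \<sigma>)"
  using assms permutes_in_image[OF assms(1)] unfolding hypU_def by auto

lemma F_adj:
  assumes k: "Suc k < n" and v: "inj_on v {..<n}" and h: "hypU n t u v"
  shows "Fs n t (u \<circ> transpose k (Suc k)) v = Fs n t u v"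
proof -
  let ?s = "transpose k (Suc k)"
  let ?P = "{\<tau>. \<tau> permutes {..<n}}"
  have sp: "?s permutes {..<n}" by (rule permutes_swap_id) (use k in auto)
  define g where "g \<tau> = rhs_summand n t (u \<circ> ?s) (v \<circ> \<tau>) - rhs_summand n t u (v \<circ> \<tau>)" for \<tau>
  have neg: "g (\<tau> \<circ> ?s) = - g \<tau>" if tau: "\<tau> permutes {..<n}" for \<tau>
  proof -
    define w where "w = v \<circ> \<tau>"
    have kk: "k \<in> {..<n}" "Suc k \<in> {..<n}" using k by auto
    have "\<tau> k \<noteq> \<tau> (Suc k)" using permutes_inj[OF tau] by (metis injD n_not_Suc_n)
    moreover have "\<tau> k \<in> {..<n}" "\<tau> (Suc k) \<in> {..<n}" using kk permutes_in_image[OF tau] by auto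
    ultimately have xy: "w k \<noteq> w (Suc k)" unfolding w_def using v by (auto dest: inj_onD)
    have hw: "hypU n t u w" unfolding w_def by (rule hypU_perm(2)[OF tau h])
    then have nz: "u k \<noteq> t * w k" "u k \<noteq> t * w (Suc k)" "u (Suc k) \<noteq> t * w k" "u (Suc k) \<noteq> t * w (Suc k)"
      using k unfolding hypU_def by auto
    define E where "E = Ee n t k u w"
    have e1: "rhs_summand n t (u \<circ> ?s) w = core t (u (Suc k)) (u k) (w k) (w (Suc k)) * E"
      unfolding decomp[OF k] E_def Ee_u[OF k] by simp
    have e2: "rhs_summand n t u w = core t (u k) (u (Suc k)) (w k) (w (Suc k)) * E"
      unfolding decomp[OF k] E_def by simp
    have e3: "rhs_summand n t (u \<circ> ?s) (w \<circ> ?s) = core t (u (Suc k)) (u k) (w (Suc k)) (w k) * E"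
      unfolding decomp[OF k] E_def Ee_u[OF k] Ee_w[OF k] by simp
    have e4: "rhs_summand n t u (w \<circ> ?s) = core t (u k) (u (Suc k)) (w (Suc k)) (w k) * E"
      unfolding decomp[OF k] E_def Ee_w[OF k] by simp
    have vw: "v \<circ> (\<tau> \<circ> ?s) = w \<circ> ?s" unfolding w_def by (simp add: comp_assoc)
    have cs: "core t (u (Suc k)) (u k) (w k) (w (Suc k)) + core t (u (Suc k)) (u k) (w (Suc k)) (w k)
       = core t (u k) (u (Suc k)) (w k) (w (Suc k)) + core t (u k) (u (Suc k)) (w (Suc k)) (w k)"
      by (rule core_sym) (use xy nz in auto)
    have "g (\<tau> \<circ> ?s) = core t (u (Suc k)) (u k) (w (Suc k)) (w k) * E - core t (u k) (u (Suc k)) (w (Suc k)) (w k) * E"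
      unfolding g_def vw e3 e4 ..
    also have "\<dots> = -(core t (u (Suc k)) (u k) (w k) (w (Suc k)) * E - core t (u k) (u (Suc k)) (w k) (w (Suc k)) * E)"
    proof -
      have "\<And>A B C D :: complex. B + D = A + C \<Longrightarrow> D * E - C * E = -(B * E - A * E)"
        by (simp add: algebra_simps) (metis add_diff_cancel_right' diff_add_eq distrib_right)
      then show ?thesis using cs by blast
    qed
    also have "\<dots> = - g \<tau>" unfolding g_def w_def[symmetric] e1 e2 ..
    finally show ?thesis .
  qed
  have "sum g ?P = sum (\<lambda>\<tau>. g (\<tau> \<circ> ?s)) ?P" by (rule sum_permutations_compose_right[OF sp])
  also have "\<dots> = sum (\<lambda>\<tau>. - g \<tau>) ?P" by (rule sum.cong) (auto simp: neg)
  also have "\<dots> = - sum g ?P" by (simp add: sum_negf)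
  finally have "sum g ?P = 0" by simp
  then show ?thesis unfolding Fs_def g_def by (simp add: sum_subtractf)
qed

lemma F_tr_aux:
  assumes "a + Suc d < n" "inj_on v {..<n}" "hypU n t u v"
  shows "Fs n t (u \<circ> transpose a (a + Suc d)) v = Fs n t u v"
  using assms
proof (induction d arbitrary: u)
  case 0
  then show ?case using F_adj[of a n v t u] by (simp only: add_Suc_right add_0_right)
next
  case (Suc d)
  define b where "b = a + Suc d"
  let ?s = "transpose b (Suc b)"
  have bn: "Suc b < n" using Suc.prems b_def by simp
  have sp: "?s permutes {..<n}" by (rule permutes_swap_id) (use bn in auto)
  have tp: "transpose a b permutes {..<n}" by (rule permutes_swap_id) (use bn b_def in auto)
  have eq: "transpose a (Suc b) = ?s \<circ> transpose a b \<circ> ?s"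
    unfolding b_def by (auto simp: fun_eq_iff transpose_def)
  have h1: "hypU n t (u \<circ> ?s) v" by (rule hypU_perm(1)[OF sp Suc.prems(3)])
  have h2: "hypU n t (u \<circ> ?s \<circ> transpose a b) v" by (rule hypU_perm(1)[OF tp h1])
  have "Fs n t (u \<circ> transpose a (a + Suc (Suc d))) v = Fs n t ((u \<circ> ?s \<circ> transpose a b) \<circ> ?s) v"
    using eq b_def by (simp add: comp_assoc)
  also have "\<dots> = Fs n t (u \<circ> ?s \<circ> transpose a b) v" by (rule F_adj[OF bn Suc.prems(2) h2])
  also have "\<dots> = Fs n t (u \<circ> ?s) v"
  proof -
    have "a + Suc d < n" using bn b_def by simp
    from Suc.IH[OF this Suc.prems(2) h1] show ?thesis unfolding b_def .
  qed
  also have "\<dots> = Fs n t u v" by (rule F_adj[OF bn Suc.prems(2) Suc.prems(3)])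
  finally show ?case .
qed

lemma F_tr:
  assumes "a \<in> {..<n}" "b \<in> {..<n}" "a \<noteq> b" "inj_on v {..<n}" "hypU n t u v"
  shows "Fs n t (u \<circ> transpose a b) v = Fs n t u v"
proof (cases "a < b")
  case True
  obtain d where "b = Suc (a + d)" using less_imp_Suc_add[OF True] by blast
  then have eq: "b = a + Suc d" by simp
  have "a + Suc d < n" using assms(2) eq by simp
  from F_tr_aux[OF this assms(4,5)] show ?thesis unfolding eq .
next
  case False
  then have "b < a" using assms(3) by simp
  obtain d where "a = Suc (b + d)" using less_imp_Suc_add[OF \<open>b < a\<close>] by blast
  then have eq: "a = b + Suc d" by simp
  have "b + Suc d < n" using assms(1) eq by simp
  from F_tr_aux[OF this assms(4,5)] show ?thesis unfolding eq by (simp only: transpose_commute)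
qed

lemma F_perm:
  assumes "\<sigma> permutes {..<n}" "inj_on v {..<n}"
  shows "hypU n t u v \<Longrightarrow> Fs n t (u \<circ> \<sigma>) v = Fs n t u v"
  using assms(1) finite_lessThan[of n]
proof (induction \<sigma> arbitrary: u rule: permutes_induct)
  case id
  then show ?case by simp
next
  case (swap a b p)
  have tp: "transpose a b permutes {..<n}" by (rule permutes_swap_id) (use swap in auto)
  have "Fs n t (u \<circ> (transpose a b \<circ> p)) v = Fs n t ((u \<circ> transpose a b) \<circ> p) v" by (simp add: comp_assoc)
  also have "\<dots> = Fs n t (u \<circ> transpose a b) v" by (rule swap.IH) (rule hypU_perm(1)[OF tp swap.prems])
  also have "\<dots> = Fs n t u v" by (rule F_tr) (use swap assms in auto)
  finally show ?case .
qed

lemma lhs_eq: "lhs_summand n t u w = Af n t u * rhs_summand n t u w"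
  unfolding lhs_summand_def rhs_summand_def Af_def by (simp only: prod.distrib ac_simps)

lemma qlemma:
  assumes "t \<noteq> 1"
  shows "(\<Prod>k<n. \<Sum>m<Suc k. t ^ m) = qpoch t n / (1 - t) ^ n"
proof (induction n)
  case 0
  then show ?case by (simp add: qpoch_def)
next
  case (Suc n)
  have q: "qpoch t (Suc n) = qpoch t n * (1 - t ^ Suc n)"
    unfolding qpoch_def by (simp add: prod.cl_ivl_Suc)
  have s: "(\<Sum>m<Suc n. t ^ m) = (1 - t ^ Suc n) / (1 - t)"
    using assms by (simp add: sum_gp_strict del: sum.lessThan_Suc)
  have nz: "1 - t \<noteq> 0" using assms by simp
  show ?case unfolding prod.lessThan_Suc Suc.IH s q using nz by (simp add: field_simps)
qed

theorem lemma3p8: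
  fixes n :: nat and t :: complex and u v :: "nat \<Rightarrow> complex"
  assumes "inj_on u {..<n}" and "inj_on v {..<n}"
    and "\<And>i j. i < n \<Longrightarrow> j < n \<Longrightarrow> u i \<noteq> t * v j"
    and "t \<noteq> 1"
  shows "(\<Sum>\<sigma>\<in>{\<sigma>. \<sigma> permutes {..<n}}. \<Sum>\<tau>\<in>{\<tau>. \<tau> permutes {..<n}}.
            lhs_summand n t (u \<circ> \<sigma>) (v \<circ> \<tau>))
       = qpoch t n / (1 - t) ^ n *
         (\<Sum>\<tau>\<in>{\<tau>. \<tau> permutes {..<n}}. rhs_summand n t u (v \<circ> \<tau>))"
proof -
  let ?P = "{\<sigma>. \<sigma> permutes {..<n}}"
  have h: "hypU n t u v" using assms(3) unfolding hypU_def by auto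
  have "(\<Sum>\<sigma>\<in>?P. \<Sum>\<tau>\<in>?P. lhs_summand n t (u \<circ> \<sigma>) (v \<circ> \<tau>))
      = (\<Sum>\<sigma>\<in>?P. Af n t (u \<circ> \<sigma>) * Fs n t (u \<circ> \<sigma>) v)"
    unfolding lhs_eq Fs_def by (simp add: sum_distrib_left)
  also have "\<dots> = (\<Sum>\<sigma>\<in>?P. Af n t (u \<circ> \<sigma>) * Fs n t u v)"
    by (rule sum.cong) (auto simp: F_perm[OF _ assms(2) h])
  also have "\<dots> = (\<Sum>\<sigma>\<in>?P. Af n t (u \<circ> \<sigma>)) * Fs n t u v"
    by (simp add: sum_distrib_right)
  also have "\<dots> = qpoch t n / (1 - t) ^ n * Fs n t u v"
    unfolding HL_lemma[OF assms(1)] qlemma[OF assms(4)] ..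
  finally show ?thesis unfolding Fs_def .
qed

end
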